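(* For the game $\mathcal{G}^g_n$ defined in the context, any classical strategy that wins with certainty must broadcast at least $\frac{1}{2}\log_2 n - 2$ bits in the worst case; that is, $B^{\mathrm{cl}}(\mathcal{G}^g_n) \geq \frac{1}{2}\log_2 n - 2$.
   Context: Write $[n]=\{1,\dots,n\}$ and let $\epsilon$ denote the empty string. A game $\mathcal{G}_n$ for $n$ players is a probability distribution over triples $(\sigma,q,W)$, where $\sigma=(G_1,\dots,G_m)$ is a tuple of disjoint sets with union $[n]$ (the groups), $q=(q_1,\dots,q_m)$ is an $m$-tuple of bitstrings (the query), and $W$ is a set of $m$-tuples of bitstrings (allowed answers). Players are arbitrary (possibly probabilistic) information-processing systems with an internal state, producing an output on each new input depending on all inputs so far and the internal state. In a classical strategy the players are classical and their initial internal states have an arbitrary joint distribution. Rules: an instance $(\sigma,q,W)$ is sampled; player $P_i$ belongs to group $G_k$ if $i\in G_k$. The game proceeds in steps; in step 1 every player in $G_k$ receives $q_k$. In each step each player produces an output which is either sent to the players of his own group or broadcast to all $n$ players, and these outputs are inputs in the next step. If $b_{t,i}$ is the (possibly empty) string broadcast by $P_i$ in step $t$, all players receive $\bar b_t = b_{t,1}\|\cdots\|b_{t,n}$ in step $t+1$, and the strings $\bar b_t$ must be self-delimiting (a player reading $\bar b_t$ bitwise can detect where it ends). The game ends when all players are in a halting state, where at most one player of each group $G_k$ specifies a final output string $a_k$ ($a_k=\epsilon$ if none); the game is won if $(a_1,\dots,a_m)\in W$. The group broadcast complexity of a strategy $\tau$ is $B(\mathcal{G}_n,\tau)=\max\sum_t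 |\bar b_t|$, the maximum over all randomness of the players and initial states and over all instances of positive probability. $B^{\mathrm{cl}}(\mathcal{G}_n)$ is the minimum of $B(\mathcal{G}_n,\tau)$ over classical strategies $\tau$ winning $\mathcal{G}_n$ with certainty. For $C=\{c_1,\dots,c_k\}\subseteq[n]$ with $k=|C|$, let $\sigma_C=(\{c_1\},\dots,\{c_k\},[n]\setminus C)$, $q_k=(0,\dots,0,1)$ ($k$ zeros), and $W_k=\{(b_1,\dots,b_k,\epsilon): b_i\in\{0,1\},\ \sum_{i=1}^k b_i\equiv 1 \pmod 2\}$. The game $\mathcal{G}^g_n$ is the uniform distribution over all triples $(\sigma_C,q_{|C|},W_{|C|})$ with $C\subseteq[n]$ and $|C|\equiv 2\pmod 4$. *)

theory Defs
  imports Complex_Main "HOL-Library.Sublist" "HOL-Library.Extended_Real"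
begin

text \<open>Bitstrings are boolean lists.  Players are indexed by 1..n.
A game instance is a triple (sigma, q, W): a list of groups, a list of query strings
(one per group) and a set of allowed answer tuples.\<close>

type_synonym bits = "bool list"
type_synonym game_inst = "nat set list \<times> bits list \<times> bits list set"

text \<open>Output of a player in one step: either a message (flag True = broadcast to all
players, flag False = sent to the own group), or entering the halting state, optionally
specifying a final output string.\<close>
datatype act = Send bool bits | Halt "bits option"

text \<open>Input of a player in one step: in step 1 the query of its group; in step t+1
the messages sent to its group in step t (indexed by sender) and the concatenated
broadcast string of step t.\<close>
datatype inp = Query bits | Recv "nat \<Rightarrow> bits option" bits

datatype 's pst = Run 's | Stop "bits option"

definition grp :: "nat set list \<Rightarrow> nat \<Rightarrow> nat" where
  "grp \<sigma> i = (LEAST k. k < length \<sigma> \<and> i \<in> \<sigma> ! k)"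

definition bcast :: "act \<Rightarrow> bits" where
  "bcast a = (case a of Send True m \<Rightarrow> m | _ \<Rightarrow> [])"

definition bbar :: "nat \<Rightarrow> (nat \<Rightarrow> act) \<Rightarrow> bits" where
  "bbar n acts = concat (map (\<lambda>i. bcast (acts i)) [1..<Suc n])"

definition gmsgs :: "nat set list \<Rightarrow> (nat \<Rightarrow> act) \<Rightarrow> nat \<Rightarrow> nat \<Rightarrow> bits option" where
  "gmsgs \<sigma> acts i = (\<lambda>j. if j \<in> \<sigma> ! grp \<sigma> i
       then (case acts j of Send False m \<Rightarrow> Some m | _ \<Rightarrow> None) else None)"

definition advance :: "(nat \<Rightarrow> 's \<Rightarrow> inp \<Rightarrow> 's \<times> act) \<Rightarrow> nat \<Rightarrow> 's pst \<Rightarrow> inp \<Rightarrow> 's pst \<times> act" where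
  "advance \<delta> i st x = (case st of
      Run s \<Rightarrow> (case \<delta> i s x of
                  (s', Halt out) \<Rightarrow> (Stop out, Halt out)
                | (s', Send b m) \<Rightarrow> (Run s', Send b m))
    | Stop out \<Rightarrow> (Stop out, Halt out))"

text \<open>exec n delta I s0 t = (statuses after step t+1, outputs produced in step t+1).
A (classical) strategy is given by the players' transition functions delta i and the
joint initial internal state s0 (drawn from the support S0 of the initial distribution;
private randomness is part of the initial internal state).\<close>
fun exec :: "nat \<Rightarrow> (nat \<Rightarrow> 's \<Rightarrow> inp \<Rightarrow> 's \<times> act) \<Rightarrow> game_inst \<Rightarrow> (nat \<Rightarrow> 's) \<Rightarrow> nat
             \<Rightarrow> (nat \<Rightarrow> 's pst) \<times> (nat \<Rightarrow> act)" where
  "exec n \<delta> I s0 0 =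
     (\<lambda>i. fst (advance \<delta> i (Run (s0 i)) (Query (fst (snd I) ! grp (fst I) i))),
      \<lambda>i. snd (advance \<delta> i (Run (s0 i)) (Query (fst (snd I) ! grp (fst I) i))))"
| "exec n \<delta> I s0 (Suc t) =
     (case exec n \<delta> I s0 t of (st, acts) \<Rightarrow>
       (\<lambda>i. fst (advance \<delta> i (st i) (Recv (gmsgs (fst I) acts i) (bbar n acts))),
        \<lambda>i. snd (advance \<delta> i (st i) (Recv (gmsgs (fst I) acts i) (bbar n acts)))))"

definition is_stop :: "'s pst \<Rightarrow> bool" where
  "is_stop st = (case st of Stop _ \<Rightarrow> True | Run _ \<Rightarrow> False)"

definition outp :: "'s pst \<Rightarrow> bits option" where
  "outp st = (case st of Stop r \<Rightarrow> r | Run _ \<Rightarrow> None)"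

definition answer :: "nat set list \<Rightarrow> (nat \<Rightarrow> bits option) \<Rightarrow> nat \<Rightarrow> bits" where
  "answer \<sigma> out k = (if \<exists>i\<in>\<sigma> ! k. out i \<noteq> None
       then the (out (SOME i. i \<in> \<sigma> ! k \<and> out i \<noteq> None)) else [])"

definition wins :: "nat \<Rightarrow> (nat \<Rightarrow> 's \<Rightarrow> inp \<Rightarrow> 's \<times> act) \<Rightarrow> game_inst \<Rightarrow> (nat \<Rightarrow> 's) \<Rightarrow> bool" where
  "wins n \<delta> I s0 = (\<exists>T. let st = fst (exec n \<delta> I s0 T); \<sigma> = fst I; W = snd (snd I) in
      (\<forall>i\<in>{1..n}. is_stop (st i))
    \<and> (\<forall>k<length \<sigma>. card {i \<in> \<sigma> ! k. outp (st i) \<noteq> None} \<le> 1)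
    \<and> map (answer \<sigma> (\<lambda>i. outp (st i))) [0..<length \<sigma>] \<in> W)"

text \<open>G is the set of instances of positive probability.\<close>
definition wins_with_certainty ::
  "nat \<Rightarrow> game_inst set \<Rightarrow> (nat \<Rightarrow> 's) set \<Rightarrow> (nat \<Rightarrow> 's \<Rightarrow> inp \<Rightarrow> 's \<times> act) \<Rightarrow> bool" where
  "wins_with_certainty n G S0 \<delta> = (\<forall>I\<in>G. \<forall>s0\<in>S0. wins n \<delta> I s0)"

text \<open>Self-delimiting broadcasts: a running player reading the broadcast string of
step t (knowing its internal state and the group messages of step t) can detect where
it ends, i.e. no possible broadcast string consistent with its knowledge is a proper
prefix of another one.\<close>
definition self_delimiting ::
  "nat \<Rightarrow> game_inst set \<Rightarrow> (nat \<Rightarrow> 's) set \<Rightarrow> (nat \<Rightarrow> 's \<Rightarrow> inp \<Rightarrow> 's \<times> act) \<Rightarrow> bool" where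
  "self_delimiting n G S0 \<delta> = (\<forall>I\<in>G. \<forall>I'\<in>G. \<forall>s0\<in>S0. \<forall>s0'\<in>S0. \<forall>t. \<forall>i\<in>{1..n}. \<forall>s.
      fst (exec n \<delta> I s0 t) i = Run s \<and> fst (exec n \<delta> I' s0' t) i = Run s \<and>
      gmsgs (fst I) (snd (exec n \<delta> I s0 t)) i = gmsgs (fst I') (snd (exec n \<delta> I' s0' t)) i
      \<longrightarrow> \<not> strict_prefix (bbar n (snd (exec n \<delta> I s0 t))) (bbar n (snd (exec n \<delta> I' s0' t))))"

definition broadcast_complexity ::
  "nat \<Rightarrow> game_inst set \<Rightarrow> (nat \<Rightarrow> 's) set \<Rightarrow> (nat \<Rightarrow> 's \<Rightarrow> inp \<Rightarrow> 's \<times> act) \<Rightarrow> enat" where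
  "broadcast_complexity n G S0 \<delta> =
     (SUP I\<in>G. SUP s0\<in>S0. SUP T. enat (\<Sum>t<T. length (bbar n (snd (exec n \<delta> I s0 t)))))"

definition sigmaC :: "nat \<Rightarrow> nat set \<Rightarrow> nat set list" where
  "sigmaC n C = map (\<lambda>c. {c}) (sorted_list_of_set C) @ [{1..n} - C]"

definition qk :: "nat \<Rightarrow> bits list" where
  "qk k = replicate k [False] @ [[True]]"

definition Wk :: "nat \<Rightarrow> bits list set" where
  "Wk k = {map (\<lambda>b. [b]) bs @ [[]] | bs. length bs = k \<and> odd (length (filter id bs))}"

definition gameG :: "nat \<Rightarrow> game_inst set" where
  "gameG n = {(sigmaC n C, qk (card C), Wk (card C)) | C. C \<subseteq> {1..n} \<and> card C mod 4 = 2}"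

end

theory Submission
  imports Defs "HOL-Library.FuncSet"
begin

lemma card_symdiff_eq:
  assumes "finite A" "finite B"
  shows "card ((A - B) \<union> (B - A)) + 2 * card (A \<inter> B) = card A + card B"
proof -
  have "card ((A - B) \<union> (B - A)) = card (A - B) + card (B - A)"
    by (rule card_Un_disjoint) (use assms in auto)
  moreover have "card (A - B) + card (A \<inter> B) = card A"
    using assms by (metis Diff_Diff_Int Int_commute card_Diff_subset_Int card_mono finite_Int inf_le2 le_add_diff_inverse2 Int_lower1 card_Diff_subset)
  moreover have "card (B - A) + card (A \<inter> B) = card B"
    using assms by (metis Int_commute Diff_Diff_Int card_Diff_subset_Int card_mono finite_Int inf_le2 le_add_diff_inverse2 Int_lower1 card_Diff_subset)
  ultimately show ?thesis by simp
qed

definition sd :: "'a set \<Rightarrow> 'a set \<Rightarrow> 'a set" where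
  "sd A B = (A - B) \<union> (B - A)"

lemma even_card_sd:
  assumes "finite A" "finite B"
  shows "even (card (sd A B)) \<longleftrightarrow> (even (card A) \<longleftrightarrow> even (card B))"
  using card_symdiff_eq[OF assms] unfolding sd_def
  by (metis even_add even_mult_iff even_numeral)

lemma sd_filter: "{a \<in> sd D E. P a} = sd {a\<in>D. P a} {a\<in>E. P a}"
  unfolding sd_def by auto

lemma sd_Int: "sd D E \<inter> X = sd (D \<inter> X) (E \<inter> X)"
  unfolding sd_def by auto

lemma sd_sd: "sd (sd D E) E = D"
  unfolding sd_def by auto

lemma sum_invol_zero:
  fixes f :: "'a \<Rightarrow> int"
  assumes "finite A" "\<And>x. x \<in> A \<Longrightarrow> g x \<in> A" "\<And>x. x \<in> A \<Longrightarrow> g (g x) = x"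
    "\<And>x. x \<in> A \<Longrightarrow> f (g x) = - f x"
  shows "sum f A = 0"
proof -
  have bij: "bij_betw g A A"
    by (rule bij_betwI[where g=g]) (use assms in auto)
  have "sum f A = sum (f \<circ> g) A"
    using sum.reindex_bij_betw[OF bij, of f] by simp
  also have "\<dots> = - sum f A"
    using assms(4) by (simp add: sum_negf[symmetric])
  finally show ?thesis by simp
qed

definition chi :: "nat set \<Rightarrow> nat set \<Rightarrow> int" where
  "chi D E = (if even (card (D \<inter> E)) then 1 else -1)"

lemma eventown:
  fixes X :: "nat set" and K :: "nat set set"
  assumes fX: "finite X" and KX: "K \<subseteq> Pow X" and e: "{} \<in> K"
    and cl: "\<And>D E. D \<in> K \<Longrightarrow> E \<in> K \<Longrightarrow> sd D E \<in> K"
    and orth: "\<And>D E. D \<in> K \<Longrightarrow> E \<in> K \<Longrightarrow> even (card (D \<inter> E))"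
  shows "card K * card K \<le> 2 ^ card X"
proof -
  define Kp where "Kp = {D \<in> Pow X. \<forall>E\<in>K. even (card (D \<inter> E))}"
  have fK: "finite K" using KX fX by (meson finite_Pow_iff finite_subset)
  have fKp: "finite Kp" unfolding Kp_def using fX by auto
  have KKp: "K \<subseteq> Kp" unfolding Kp_def using KX orth by auto
  have L1: "(\<Sum>D\<in>Pow X. chi D E) = 0" if EK: "E \<in> K" and En: "E \<noteq> {}" for E
  proof -
    obtain x where x: "x \<in> E" using En by auto
    have xX: "x \<in> X" using x EK KX by auto
    have EX: "E \<subseteq> X" using EK KX by auto
    show ?thesis
    proof (rule sum_invol_zero[where g="\<lambda>D. sd D {x}"])
      show "finite (Pow X)" using fX by simp
      show "sd D {x} \<in> Pow X" if "D \<in> Pow X" for D using that xX unfolding sd_def by auto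
      show "sd (sd D {x}) {x} = D" for D by (rule sd_sd)
      show "chi (sd D {x}) E = - chi D E" if "D \<in> Pow X" for D
      proof -
        have "sd D {x} \<inter> E = sd (D \<inter> E) {x}" using x unfolding sd_def by auto
        moreover have "finite (D \<inter> E)" using EX fX finite_subset by blast
        ultimately show ?thesis unfolding chi_def using even_card_sd[of "D \<inter> E" "{x}"] by auto
      qed
    qed
  qed
  have L2: "(\<Sum>E\<in>K. chi D E) = 0" if DX: "D \<in> Pow X" and DK: "D \<notin> Kp" for D
  proof -
    obtain E0 where E0: "E0 \<in> K" "odd (card (D \<inter> E0))" using DX DK unfolding Kp_def by auto
    show ?thesis
    proof (rule sum_invol_zero[where g="\<lambda>E. sd E E0"])
      show "finite K" by (rule fK)
      show "sd E E0 \<in> K" if "E \<in> K" for E using cl that E0 by auto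
      show "sd (sd E E0) E0 = E" for E by (rule sd_sd)
      show "chi D (sd E E0) = - chi D E" if "E \<in> K" for E
      proof -
        have "D \<inter> sd E E0 = sd (D \<inter> E) (D \<inter> E0)" unfolding sd_def by auto
        moreover have "finite (D \<inter> E)" "finite (D \<inter> E0)" using DX fX finite_subset by auto
        ultimately show ?thesis unfolding chi_def using even_card_sd[of "D \<inter> E" "D \<inter> E0"] E0 by auto
      qed
    qed
  qed
  have "(\<Sum>D\<in>Pow X. \<Sum>E\<in>K. chi D E) = (\<Sum>E\<in>K. \<Sum>D\<in>Pow X. chi D E)"
    by (rule sum.swap)
  also have "\<dots> = (\<Sum>E\<in>K. if E = {} then 2 ^ card X else 0)"
  proof (rule sum.cong)
    fix E assume E: "E \<in> K"
    show "(\<Sum>D\<in>Pow X. chi D E) = (if E = {} then 2 ^ card X else 0)"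
    proof (cases "E = {}")
      case True
      then show ?thesis using fX by (simp add: chi_def card_Pow)
    qed (use L1 E in auto)
  qed simp
  also have "\<dots> = 2 ^ card X" using e fK by (simp add: sum.delta')
  finally have A: "(\<Sum>D\<in>Pow X. \<Sum>E\<in>K. chi D E) = 2 ^ card X" .
  have "(\<Sum>D\<in>Pow X. \<Sum>E\<in>K. chi D E) = (\<Sum>D\<in>Pow X. if D \<in> Kp then int (card K) else 0)"
  proof (rule sum.cong)
    fix D assume D: "D \<in> Pow X"
    show "(\<Sum>E\<in>K. chi D E) = (if D \<in> Kp then int (card K) else 0)"
    proof (cases "D \<in> Kp")
      case True
      then have "\<forall>E\<in>K. chi D E = 1" unfolding Kp_def chi_def by auto
      then show ?thesis using True by simp
    qed (use L2 D in auto)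
  qed simp
  also have "\<dots> = int (card K) * int (card Kp)"
  proof -
    have "Kp \<subseteq> Pow X" unfolding Kp_def by auto
    then have "(\<Sum>D\<in>Pow X. if D \<in> Kp then int (card K) else 0) = (\<Sum>D\<in>Kp. int (card K))"
      using fX by (simp add: sum.If_cases Int_absorb1 inf.absorb2)
    then show ?thesis by simp
  qed
  finally have "int (card K) * int (card Kp) = 2 ^ card X" using A by simp
  then have "card K * card Kp = 2 ^ card X" by (metis of_nat_eq_iff of_nat_mult of_nat_numeral of_nat_power)
  moreover have "card K \<le> card Kp" using KKp fKp by (rule card_mono[rotated])
  ultimately show ?thesis by (metis mult_le_mono2)
qed

lemma comb:
  fixes X :: "nat set" and Ws :: "bits set" and F :: "nat \<Rightarrow> bits \<Rightarrow> bool" and Wf :: "nat set \<Rightarrow> bits"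
  assumes fX: "finite X" and fW: "finite Ws"
    and H: "\<And>C. C \<subseteq> X \<Longrightarrow> card C mod 4 = 2 \<Longrightarrow> Wf C \<in> Ws \<and> odd (card {a\<in>C. F a (Wf C)})"
  shows "card X \<le> 2 * card Ws + 2"
proof -
  define K where "K = {D \<in> Pow X. even (card D) \<and> (\<forall>w\<in>Ws. even (card {a\<in>D. F a w}))}"
  have fin: "finite D" if "D \<in> Pow X" for D using that fX finite_subset by auto
  have KX: "K \<subseteq> Pow X" unfolding K_def by auto
  have m4: "card D mod 4 = 0" if "D \<in> K" for D
  proof -
    have "even (card D)" using that unfolding K_def by auto
    then have "card D mod 4 = 0 \<or> card D mod 4 = 2" by presburger
    moreover have "card D mod 4 \<noteq> 2"
    proof
      assume "card D mod 4 = 2"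
      then have "Wf D \<in> Ws \<and> odd (card {a\<in>D. F a (Wf D)})" using H that unfolding K_def by auto
      then show False using that unfolding K_def by auto
    qed
    ultimately show ?thesis by auto
  qed
  have cl: "sd D E \<in> K" if "D \<in> K" "E \<in> K" for D E
  proof -
    have fD: "finite D" and fE: "finite E" using that KX fin by auto
    have "sd D E \<in> Pow X" using that KX unfolding sd_def by auto
    moreover have "even (card (sd D E))" using that even_card_sd[OF fD fE] unfolding K_def by auto
    moreover have "even (card {a \<in> sd D E. F a w})" if "w \<in> Ws" for w
    proof -
      have f2: "finite {a\<in>D. F a w}" "finite {a\<in>E. F a w}" using fD fE by auto
      have "even (card {a\<in>D. F a w})" "even (card {a\<in>E. F a w})" using \<open>D \<in> K\<close> \<open>E \<in> K\<close> that unfolding K_def by auto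
      then show ?thesis unfolding sd_filter using even_card_sd[OF f2] by auto
    qed
    ultimately show ?thesis unfolding K_def by auto
  qed
  have orth: "even (card (D \<inter> E))" if "D \<in> K" "E \<in> K" for D E
  proof -
    have fD: "finite D" and fE: "finite E" using that KX fin by auto
    have "card (sd D E) mod 4 = 0" "card D mod 4 = 0" "card E mod 4 = 0" using m4 cl that by auto
    moreover have "card (sd D E) + 2 * card (D \<inter> E) = card D + card E"
      using card_symdiff_eq[OF fD fE] unfolding sd_def .
    ultimately show ?thesis by presburger
  qed
  have e: "{} \<in> K" unfolding K_def by auto
  have EV: "card K * card K \<le> 2 ^ card X"
    by (rule eventown[OF fX KX e cl orth])
  define phi where "phi D = (restrict (\<lambda>w. even (card {a\<in>D. F a w})) Ws, even (card D))" for D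
  define rep where "rep y = (SOME D. D \<in> Pow X \<and> phi D = y)" for y
  define g where "g D = (phi D, sd D (rep (phi D)))" for D
  have rep: "rep (phi D) \<in> Pow X \<and> phi (rep (phi D)) = phi D" if "D \<in> Pow X" for D
    unfolding rep_def by (rule someI[of _ D]) (use that in auto)
  have inj: "inj_on g (Pow X)"
  proof
    fix D D' assume "D \<in> Pow X" "D' \<in> Pow X" "g D = g D'"
    then have "phi D = phi D'" "sd D (rep (phi D)) = sd D' (rep (phi D'))" unfolding g_def by auto
    then show "D = D'" by (metis sd_sd)
  qed
  have img: "g ` Pow X \<subseteq> ((PiE Ws (\<lambda>_. UNIV)) \<times> UNIV) \<times> K"
  proof
    fix y assume "y \<in> g ` Pow X"
    then obtain D where D: "D \<in> Pow X" and y: "y = g D" by auto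
    define r where "r = rep (phi D)"
    have r: "r \<in> Pow X" "phi r = phi D" using rep[OF D] unfolding r_def by auto
    have fD: "finite D" and fr: "finite r" using D r fin by auto
    have "sd D r \<in> Pow X" using D r unfolding sd_def by auto
    moreover have "even (card (sd D r))"
      using r(2) even_card_sd[OF fD fr] unfolding phi_def by auto
    moreover have "even (card {a \<in> sd D r. F a w})" if "w \<in> Ws" for w
    proof -
      have "fst (phi D) w = fst (phi r) w" using r(2) by simp
      then have "even (card {a\<in>D. F a w}) = even (card {a\<in>r. F a w})" using that unfolding phi_def by simp
      moreover have f2: "finite {a\<in>D. F a w}" "finite {a\<in>r. F a w}" using fD fr by auto
      ultimately show ?thesis unfolding sd_filter using even_card_sd[OF f2] by simp
    qed
    ultimately have sK: "sd D r \<in> K" unfolding K_def by blast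
    have "phi D \<in> PiE Ws (\<lambda>_. UNIV) \<times> UNIV" unfolding phi_def by simp
    moreover have "y = (phi D, sd D r)" unfolding y g_def r_def by simp
    ultimately show "y \<in> ((PiE Ws (\<lambda>_. UNIV)) \<times> UNIV) \<times> K" using sK by simp
  qed
  have fK: "finite K" using KX fX by (meson finite_Pow_iff finite_subset)
  have "card (Pow X) \<le> card (((PiE Ws (\<lambda>_. UNIV::bool set)) \<times> (UNIV::bool set)) \<times> K)"
    by (rule card_inj_on_le[OF inj img]) (simp add: fW fK finite_PiE)
  also have "\<dots> = 2 ^ card Ws * 2 * card K"
    using fW fK by (simp add: card_cartesian_product card_PiE)
  finally have A: "2 ^ card X \<le> 2 ^ card Ws * 2 * card K" using fX by (simp add: card_Pow)
  have "(2::nat) ^ (2 * card X) = 2 ^ card X * 2 ^ card X" by (simp add: power_add[symmetric] mult_2)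
  also have "\<dots> \<le> (2 ^ card Ws * 2 * card K) * (2 ^ card Ws * 2 * card K)"
    by (rule mult_mono[OF A A]) auto
  also have "\<dots> = 2 ^ (2 * card Ws + 2) * (card K * card K)"
    by (simp add: power_add power_mult algebra_simps power2_eq_square)
  also have "\<dots> \<le> 2 ^ (2 * card Ws + 2) * 2 ^ card X"
    using EV by simp
  also have "\<dots> = 2 ^ (2 * card Ws + 2 + card X)" by (simp add: power_add)
  finally have P: "(2::nat) ^ (2 * card X) \<le> 2 ^ (2 * card Ws + 2 + card X)" .
  have "2 * card X \<le> 2 * card Ws + 2 + card X"
    by (rule power_le_imp_le_exp[OF _ P]) simp
  then show ?thesis by simp
qed



definition gm :: "nat \<Rightarrow> act \<Rightarrow> nat \<Rightarrow> bits option" where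
  "gm a x = (\<lambda>j. if j = a then (case x of Send False m \<Rightarrow> Some m | _ \<Rightarrow> None) else None)"

lemma sigmaC_facts:
  assumes "finite C" "a \<in> C"
  shows "\<exists>k<card C. grp (sigmaC n C) a = k \<and> sigmaC n C ! k = {a} \<and> sorted_list_of_set C ! k = a"
proof -
  define xs where "xs = sorted_list_of_set C"
  have len: "length xs = card C" and dist: "distinct xs" and set: "set xs = C"
    using assms unfolding xs_def by auto
  obtain k where k: "k < length xs" "xs ! k = a" using assms set by (metis in_set_conv_nth)
  have nth1: "sigmaC n C ! j = {xs ! j}" if "j < length xs" for j
    using that unfolding sigmaC_def xs_def[symmetric] by (simp add: nth_append)
  have nth2: "sigmaC n C ! length xs = {1..n} - C"
    unfolding sigmaC_def xs_def[symmetric] by (simp add: nth_append)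
  have lenS: "length (sigmaC n C) = Suc (length xs)" unfolding sigmaC_def xs_def by simp
  have "grp (sigmaC n C) a = k"
    unfolding grp_def
  proof (rule Least_equality)
    show "k < length (sigmaC n C) \<and> a \<in> sigmaC n C ! k" using k nth1 lenS by auto
    fix j assume j: "j < length (sigmaC n C) \<and> a \<in> sigmaC n C ! j"
    show "k \<le> j"
    proof (cases "j < length xs")
      case True
      then have "xs ! j = a" using j nth1 by auto
      then have "j = k" using k True dist by (metis nth_eq_iff_index_eq)
      then show ?thesis by simp
    next
      case False
      then have "j = length xs" using j lenS by auto
      then have False using j nth2 assms by auto
      then show ?thesis ..
    qed
  qed
  then show ?thesis using k nth1 len unfolding xs_def by auto
qed

lemma gmsgs_single:
  assumes "\<sigma> ! grp \<sigma> a = {a}"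
  shows "gmsgs \<sigma> acts a = gm a (acts a)"
  unfolding gmsgs_def gm_def using assms by (auto simp: fun_eq_iff)

lemma exec_Suc_fst:
  "fst (exec n \<delta> I s0 (Suc t)) i = fst (advance \<delta> i (fst (exec n \<delta> I s0 t) i)
     (Recv (gmsgs (fst I) (snd (exec n \<delta> I s0 t)) i) (bbar n (snd (exec n \<delta> I s0 t)))))"
  by (simp add: split_beta)

lemma exec_Suc_snd:
  "snd (exec n \<delta> I s0 (Suc t)) i = snd (advance \<delta> i (fst (exec n \<delta> I s0 t) i)
     (Recv (gmsgs (fst I) (snd (exec n \<delta> I s0 t)) i) (bbar n (snd (exec n \<delta> I s0 t)))))"
  by (simp add: split_beta)

lemma stop_persist:
  assumes "fst (exec n \<delta> I s0 t) i = Stop out"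
  shows "fst (exec n \<delta> I s0 (t + d)) i = Stop out"
proof (induction d)
  case 0 then show ?case using assms by simp
next
  case (Suc d) then show ?case using exec_Suc_fst[of n \<delta> I s0 "t+d" i] by (simp add: advance_def del: exec.simps)
qed

lemma stop_persist_le:
  assumes "fst (exec n \<delta> I s0 t) i = Stop out" "t \<le> t'"
  shows "fst (exec n \<delta> I s0 t') i = Stop out"
  using stop_persist[OF assms(1), of "t' - t"] assms(2) by simp

lemma concat_split:
  assumes "t < T"
  shows "concat (map f [0..<T]) = concat (map f [0..<t]) @ f t @ concat (map f [Suc t..<T])"
proof -
  have "[0..<T] = [0..<t] @ t # [Suc t..<T]"
    using assms by (metis le_less upt_add_eq_append upt_conv_Cons zero_le add_diff_inverse_nat
        less_imp_le_nat not_less)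
  then show ?thesis by simp
qed



context
  fixes n :: nat and S0 :: "(nat \<Rightarrow> 's) set" and \<delta> :: "nat \<Rightarrow> 's \<Rightarrow> inp \<Rightarrow> 's \<times> act" and s0 :: "nat \<Rightarrow> 's"
  assumes s0: "s0 \<in> S0"
    and winc: "wins_with_certainty n (gameG n) S0 \<delta>"
    and sdl: "self_delimiting n (gameG n) S0 \<delta>"
begin

definition "fam = {C. C \<subseteq> {1..n} \<and> card C mod 4 = 2}"
definition "inst C = (sigmaC n C, qk (card C), Wk (card C))"
definition "ST C t = fst (exec n \<delta> (inst C) s0 t)"
definition "AC C t = snd (exec n \<delta> (inst C) s0 t)"
definition "BB C t = bbar n (AC C t)"
definition "PP C t = concat (map (BB C) [0..<t])"

lemma fam_fin: "C \<in> fam \<Longrightarrow> finite C"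
  unfolding fam_def using finite_subset by blast

lemma inst_in: "C \<in> fam \<Longrightarrow> inst C \<in> gameG n"
  unfolding fam_def inst_def gameG_def by auto

lemma grp_inst:
  assumes "C \<in> fam" "a \<in> C"
  shows "fst (inst C) ! grp (fst (inst C)) a = {a}"
    and "fst (snd (inst C)) ! grp (fst (inst C)) a = [False]"
proof -
  obtain k where k: "k < card C" "grp (sigmaC n C) a = k" "sigmaC n C ! k = {a}"
    using sigmaC_facts[OF fam_fin[OF assms(1)] assms(2), of n] by auto
  show "fst (inst C) ! grp (fst (inst C)) a = {a}" using k unfolding inst_def by simp
  show "fst (snd (inst C)) ! grp (fst (inst C)) a = [False]"
    using k unfolding inst_def qk_def by (simp add: nth_append)
qed

lemma step0:
  assumes "C \<in> fam" "a \<in> C"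
  shows "ST C 0 a = fst (advance \<delta> a (Run (s0 a)) (Query [False]))"
    and "AC C 0 a = snd (advance \<delta> a (Run (s0 a)) (Query [False]))"
  using grp_inst(2)[OF assms] unfolding ST_def AC_def by (simp_all add: inst_def)

lemma stepS:
  assumes "C \<in> fam" "a \<in> C"
  shows "ST C (Suc t) a = fst (advance \<delta> a (ST C t a) (Recv (gm a (AC C t a)) (BB C t)))"
    and "AC C (Suc t) a = snd (advance \<delta> a (ST C t a) (Recv (gm a (AC C t a)) (BB C t)))"
  unfolding ST_def AC_def BB_def exec_Suc_fst exec_Suc_snd
    gmsgs_single[OF grp_inst(1)[OF assms]] by simp_all

lemma is_stop_persist:
  assumes "is_stop (ST C T a)" "T \<le> t"
  shows "is_stop (ST C t a)"
proof -
  obtain out where "ST C T a = Stop out" using assms(1) unfolding is_stop_def by (auto split: pst.splits)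
  then have "ST C t a = Stop out" using stop_persist_le assms(2) unfolding ST_def by metis
  then show ?thesis unfolding is_stop_def by simp
qed

lemma same_traj:
  assumes C: "C \<in> fam" and C': "C' \<in> fam" and a: "a \<in> C" and a': "a \<in> C'"
    and sT: "is_stop (ST C T a)" and sT': "is_stop (ST C' T' a)" and PPe: "PP C T = PP C' T'"
  shows "ST C t a = ST C' t a \<and> AC C t a = AC C' t a \<and> (\<not> is_stop (ST C t a) \<longrightarrow> PP C t = PP C' t)"
proof (induction t)
  case 0
  then show ?case using step0[OF C a] step0[OF C' a'] by (simp add: PP_def)
next
  case (Suc t)
  then have e1: "ST C t a = ST C' t a" and e2: "AC C t a = AC C' t a" by auto
  show ?case
  proof (cases "ST C t a")
    case (Stop out)
    then show ?thesis using stepS[OF C a, of t] stepS[OF C' a', of t] e1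
      by (simp add: advance_def is_stop_def)
  next
    case (Run s)
    then have nst: "\<not> is_stop (ST C t a)" "\<not> is_stop (ST C' t a)" using e1 by (auto simp: is_stop_def)
    then have Pe: "PP C t = PP C' t" using Suc by auto
    have tT: "t < T" using nst(1) is_stop_persist[OF sT] by (meson not_less)
    have tT': "t < T'" using nst(2) is_stop_persist[OF sT'] by (meson not_less)
    have "PP C t @ BB C t @ concat (map (BB C) [Suc t..<T]) = PP C' t @ BB C' t @ concat (map (BB C') [Suc t..<T'])"
      using PPe concat_split[OF tT, of "BB C"] concat_split[OF tT', of "BB C'"] unfolding PP_def by simp
    then have "BB C t @ concat (map (BB C) [Suc t..<T]) = BB C' t @ concat (map (BB C') [Suc t..<T'])"
      using Pe by simp
    then have cmp: "prefix (BB C t) (BB C' t) \<or> prefix (BB C' t) (BB C t)"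
      by (metis prefix_same_cases prefixI)
    have aN: "a \<in> {1..n}" using C a unfolding fam_def by auto
    have gme: "gmsgs (fst (inst C)) (AC C t) a = gmsgs (fst (inst C')) (AC C' t) a"
      using gmsgs_single[OF grp_inst(1)[OF C a]] gmsgs_single[OF grp_inst(1)[OF C' a']] e2 by simp
    have SD: "\<not> strict_prefix (bbar n (snd (exec n \<delta> I s0 t))) (bbar n (snd (exec n \<delta> I' s0 t)))"
      if "I \<in> gameG n" "I' \<in> gameG n" "fst (exec n \<delta> I s0 t) a = Run s" "fst (exec n \<delta> I' s0 t) a = Run s"
        "gmsgs (fst I) (snd (exec n \<delta> I s0 t)) a = gmsgs (fst I') (snd (exec n \<delta> I' s0 t)) a" for I I'
      using sdl that s0 aN unfolding self_delimiting_def by blast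
    have n1: "\<not> strict_prefix (BB C t) (BB C' t)"
      using SD[OF inst_in[OF C] inst_in[OF C']] Run e1 gme unfolding BB_def AC_def ST_def by simp
    have n2: "\<not> strict_prefix (BB C' t) (BB C t)"
      using SD[OF inst_in[OF C'] inst_in[OF C]] Run e1 gme unfolding BB_def AC_def ST_def by simp
    have Be: "BB C t = BB C' t" using cmp n1 n2 by (auto simp: strict_prefix_def)
    have "ST C (Suc t) a = ST C' (Suc t) a" "AC C (Suc t) a = AC C' (Suc t) a"
      using stepS[OF C a, of t] stepS[OF C' a', of t] e1 e2 Be by simp_all
    moreover have "PP C (Suc t) = PP C' (Suc t)" using Pe Be unfolding PP_def by simp
    ultimately show ?thesis by simp
  qed
qed

definition "wcond C T = ((\<forall>i\<in>{1..n}. is_stop (ST C T i))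
   \<and> map (answer (sigmaC n C) (\<lambda>i. outp (ST C T i))) [0..<length (sigmaC n C)] \<in> Wk (card C))"
definition "Tw C = (SOME T. wcond C T)"

lemma Tw: assumes "C \<in> fam" shows "wcond C (Tw C)"
proof -
  have "wins n \<delta> (inst C) s0" using winc inst_in[OF assms] s0 unfolding wins_with_certainty_def by blast
  then have "\<exists>T. wcond C T" unfolding wins_def wcond_def Let_def ST_def by (auto simp: inst_def)
  then show ?thesis unfolding Tw_def by (rule someI_ex)
qed

definition "outC C a = outp (ST C (Tw C) a)"
definition "bitC C a = (outC C a = Some [True])"

lemma out_det:
  assumes C: "C \<in> fam" and C': "C' \<in> fam" and a: "a \<in> C" and a': "a \<in> C'"
    and PPe: "PP C (Tw C) = PP C' (Tw C')"
  shows "outC C a = outC C' a"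
proof -
  have aN: "a \<in> {1..n}" using C a unfolding fam_def by auto
  have sT: "is_stop (ST C (Tw C) a)" using Tw[OF C] aN unfolding wcond_def by auto
  have sT': "is_stop (ST C' (Tw C') a)" using Tw[OF C'] aN unfolding wcond_def by auto
  obtain o1 where o1: "ST C (Tw C) a = Stop o1" using sT unfolding is_stop_def by (auto split: pst.splits)
  obtain o2 where o2: "ST C' (Tw C') a = Stop o2" using sT' unfolding is_stop_def by (auto split: pst.splits)
  have "ST C' (Tw C) a = Stop o1" using same_traj[OF C C' a a' sT sT' PPe, of "Tw C"] o1 by simp
  then have "ST C' (max (Tw C) (Tw C')) a = Stop o1" using stop_persist_le unfolding ST_def by (metis max.cobounded1)
  moreover have "ST C' (max (Tw C) (Tw C')) a = Stop o2" using o2 stop_persist_le unfolding ST_def by (metis max.cobounded2)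
  ultimately have "o1 = o2" by simp
  then show ?thesis unfolding outC_def using o1 o2 by (simp add: outp_def)
qed

lemma odd_bits:
  assumes C: "C \<in> fam"
  shows "odd (card {a\<in>C. bitC C a})"
proof -
  define xs where "xs = sorted_list_of_set C"
  have fC: "finite C" using fam_fin[OF C] .
  have len: "length xs = card C" and dist: "distinct xs" and set: "set xs = C"
    using fC unfolding xs_def by auto
  define out where "out = (\<lambda>i. outp (ST C (Tw C) i))"
  obtain bs where bs: "length bs = card C" "odd (length (filter id bs))"
    "map (answer (sigmaC n C) out) [0..<length (sigmaC n C)] = map (\<lambda>b. [b]) bs @ [[]]"
    using Tw[OF C] unfolding wcond_def Wk_def out_def by auto
  have lenS: "length (sigmaC n C) = Suc (card C)" unfolding sigmaC_def using len xs_def by simp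
  have bk: "bitC C (xs ! k) = bs ! k" if k: "k < card C" for k
  proof -
    have "answer (sigmaC n C) out k = [bs ! k]"
    proof -
      have "map (answer (sigmaC n C) out) [0..<length (sigmaC n C)] ! k = (map (\<lambda>b. [b]) bs @ [[]]) ! k"
        using bs(3) by simp
      then show ?thesis using k lenS bs(1) by (simp add: nth_append del: upt_Suc)
    qed
    moreover have "sigmaC n C ! k = {xs ! k}"
      using k len unfolding sigmaC_def xs_def[symmetric] by (simp add: nth_append)
    moreover have nN: "out (xs ! k) \<noteq> None"
    proof
      assume "out (xs ! k) = None"
      then have "answer (sigmaC n C) out k = []" using \<open>sigmaC n C ! k = {xs ! k}\<close> unfolding answer_def by auto
      then show False using \<open>answer (sigmaC n C) out k = [bs ! k]\<close> by simp
    qed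
    moreover have "(SOME i. i \<in> {xs ! k} \<and> out i \<noteq> None) = xs ! k" using nN by (intro some_equality) auto
    ultimately have "the (out (xs ! k)) = [bs ! k]"
      unfolding answer_def by (auto split: if_splits)
    then have "out (xs ! k) = Some [bs ! k]" using nN by auto
    then show ?thesis unfolding bitC_def outC_def out_def by auto
  qed
  have "bs = map (bitC C) xs"
    by (rule nth_equalityI) (use bs(1) len bk in auto)
  then have "length (filter id bs) = length (filter (bitC C) xs)"
    by (simp add: filter_map comp_def length_filter_map[symmetric])
  also have "\<dots> = card (set (filter (bitC C) xs))"
    using dist by (metis distinct_card distinct_filter)
  also have "set (filter (bitC C) xs) = {a\<in>C. bitC C a}" using set by auto
  finally show ?thesis using bs(2) by (simp add: id_def)
qed

lemma len_PP:
  assumes C: "C \<in> fam" and B: "broadcast_complexity n (gameG n) S0 \<delta> = enat B"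
  shows "length (PP C T) \<le> B"
proof -
  have "length (PP C T) = (\<Sum>t<T. length (bbar n (snd (exec n \<delta> (inst C) s0 t))))"
    unfolding PP_def BB_def AC_def length_concat map_map
    by (simp add: sum_set_upt_conv_sum_list_nat[symmetric] atLeast0LessThan comp_def)
  moreover have "enat (\<Sum>t<T. length (bbar n (snd (exec n \<delta> (inst C) s0 t)))) \<le> broadcast_complexity n (gameG n) S0 \<delta>"
    unfolding broadcast_complexity_def
    by (rule SUP_upper2[OF inst_in[OF C]], rule SUP_upper2[OF s0], rule SUP_upper[of T]) simp
  ultimately show ?thesis using B by simp
qed

lemma bound:
  assumes B: "broadcast_complexity n (gameG n) S0 \<delta> = enat B"
  shows "n \<le> 2 ^ (B + 2)"
proof -
  define Fa where "Fa a w = (\<exists>C\<in>fam. a \<in> C \<and> PP C (Tw C) = w \<and> bitC C a)" for a w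
  have FaE: "Fa a (PP C (Tw C)) = bitC C a" if "C \<in> fam" "a \<in> C" for a C
    unfolding Fa_def using out_det[OF that(1) _ that(2)] that unfolding bitC_def by metis
  define Ws where "Ws = {xs. set xs \<subseteq> (UNIV::bool set) \<and> length xs \<le> B}"
  have fW: "finite Ws" unfolding Ws_def by (rule finite_lists_length_le) simp
  have cW: "card Ws = (\<Sum>i\<le>B. 2 ^ i)" unfolding Ws_def by (subst card_lists_length_le) (simp_all add: card_UNIV_bool)
  have geo: "(\<Sum>i\<le>m. (2::nat) ^ i) + 1 = 2 ^ (m + 1)" for m by (induction m) simp_all
  have "card {1..n} \<le> 2 * card Ws + 2"
  proof (rule comb[OF _ fW])
    fix C assume "C \<subseteq> {1..n}" "card C mod 4 = 2"
    then have C: "C \<in> fam" unfolding fam_def by auto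
    have "PP C (Tw C) \<in> Ws" using len_PP[OF C B] unfolding Ws_def by simp
    moreover have "{a\<in>C. Fa a (PP C (Tw C))} = {a\<in>C. bitC C a}" using FaE[OF C] by auto
    ultimately show "PP C (Tw C) \<in> Ws \<and> odd (card {a\<in>C. Fa a (PP C (Tw C))})"
      using odd_bits[OF C] by simp
  qed simp
  then show ?thesis using cW geo[of B] by simp
qed

end

theorem lemma2:
  fixes n :: nat and S0 :: "(nat \<Rightarrow> 's) set" and \<delta> :: "nat \<Rightarrow> 's \<Rightarrow> inp \<Rightarrow> 's \<times> act"
  assumes "2 \<le> n"
    and "S0 \<noteq> {}"
    and "wins_with_certainty n (gameG n) S0 \<delta>"
    and "self_delimiting n (gameG n) S0 \<delta>"
  shows "ereal (log 2 (real n) / 2 - 2) \<le> ereal_of_enat (broadcast_complexity n (gameG n) S0 \<delta>)"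
proof (cases "broadcast_complexity n (gameG n) S0 \<delta>")
  case (enat B)
  obtain s0 where s0: "s0 \<in> S0" using assms(2) by auto
  have nB: "n \<le> 2 ^ (B + 2)" using bound[OF s0 assms(3) assms(4) enat] .
  have r1: "real n \<le> real (2 ^ (B + 2))" using nB by (simp only: of_nat_le_iff)
  have r2: "real (2 ^ (B + 2)) = (2::real) ^ (B + 2)" by simp
  have npos: "0 < real n" using assms(1) by simp
  have "log 2 (real n) \<le> log 2 (2 ^ (B + 2))"
    using r1 r2 npos log_le_cancel_iff[of 2 "real n" "2 ^ (B + 2)"] by simp
  also have "\<dots> = real (B + 2)" by (rule log_pow_cancel) simp_all
  also have "\<dots> = real B + 2" by simp
  finally have "log 2 (real n) / 2 - 2 \<le> real B" by simp
  then show ?thesis using enat by simp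
next
  case infinity
  then show ?thesis by simp
qed

end
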